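(* Suppose Assumption 1 holds with constant $\alpha>0$, and fix $0\le h<H$. For any policy $\pi\in\varPi$, any partial trajectory $\tau_h\in(\mathscr O\times\mathscr A)^h$ with $\pi(\tau_h)>0$, any $\theta\in\varTheta$ and any $\mathbf w\in\mathbb R^{\mathscr O}$, $$\sum_{\tau_{-h}\in(\mathscr O\times\mathscr A)^{H-h}}\pi(\tau_{-h}\mid\tau_h)\,\big|\mathbf B^\theta_{H:h+1}(\tau_{-h})\mathbf w\big|\le\frac{\sqrt S}{\alpha}\|\mathbf w\|_1.$$
   Context: A POMDP with parameter $\theta$ has finite state set $\mathscr S$ ($|\mathscr S|=S$), action set $\mathscr A$, observation set $\mathscr O$ ($|\mathscr O|=O$), horizon $H$, transition kernels $T_h^\theta:\mathscr S\times\mathscr A\to\Delta(\mathscr S)$ ($h\in[H-1]$) and observation kernels $Z^\theta_h:\mathscr S\to\Delta(\mathscr O)$ ($h\in[H]$); $\varTheta$ is the set of parameters. $\mathbb T^\theta_{h,a}$ is the $S\times S$ matrix with entries $\mathbb T^\theta_{h,a}(s',s)=T_h^\theta(s'\mid s,a)$; $\mathbb Z^\theta_h$ is the $O\times S$ matrix with entries $\mathbb Z_h^\theta(o,s)=Z_h^\theta(o\mid s)$; $\mathbb Z_h^{\theta\dagger}$ is its Moore–Penrose pseudoinverse; $\mathrm{diag}(\mathbb Z_h^\theta(o,\cdot))$ is the diagonal matrix with diagonal $(Z^\theta_h(o\mid s))_s$. Observable operators: $\mathbf B_h^\theta(a,o)=\mathbb Z^\theta_{h+1}\mathbb T^\theta_{h,a}\mathrm{diag}(\mathbb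 Z_h^\theta(o,\cdot))\mathbb Z_h^{\theta\dagger}$ for $h\in[H-1]$. For a full trajectory $\tau=(o_t,a_t)_{t=1}^H$, $\tau_h=(o_t,a_t)_{t=1}^h$ and $\tau_{-h}=(o_t,a_t)_{t=h+1}^H$; define the row vector $\mathbf B^\theta_{H:h+1}(\tau_{-h})=\mathbf e_{o_H}^T$ if $h=H-1$, and $\mathbf B^\theta_{H:h+1}(\tau_{-h})=\mathbf e_{o_H}^T\mathbf B^\theta_{H-1}(a_{H-1},o_{H-1})\cdots\mathbf B^\theta_{h+1}(a_{h+1},o_{h+1})$ if $h<H-1$. A deterministic policy $\pi=(\pi_t)_{t=1}^H$ has $\pi_t:(\mathscr O\times\mathscr A)^{t-1}\times\mathscr O\to\mathscr A$; $\varPi$ is the set of such policies; $\pi(\tau_h)=\prod_{t=1}^h\mathbf 1\{\pi_t(\tau_{t-1},o_t)=a_t\}$ (equal to $1$ for $h=0$), and $\pi(\tau_{-h}\mid\tau_h)=\pi(\tau_h,\tau_{-h})/\pi(\tau_h)$ when $\pi(\tau_h)>0$. Assumption 1 (undercomplete, $\alpha$-weakly revealing): $O\ge S$, and for all $\theta\in\varTheta$ and all $h\in[H]$ the smallest singular value satisfies $\sigma_{\min}(\mathbb Z_h^\theta)\ge\alpha$. *)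

theory Defs
  imports "HOL-Analysis.Analysis"
begin

definition pinv :: "real^'n^'m \<Rightarrow> real^'m^'n" where
  "pinv A = (THE X. A ** X ** A = A \<and> X ** A ** X = X
                   \<and> transpose (A ** X) = A ** X \<and> transpose (X ** A) = X ** A)"

definition sigma_min :: "real^'n^'m \<Rightarrow> real" where
  "sigma_min A = sqrt (Min {l. \<exists>v. v \<noteq> 0 \<and> (transpose A ** A) *v v = l *\<^sub>R v})"

text \<open>Kernels: T th h s a s' = T_h(s' | s, a); Z th h s o = Z_h(o | s).\<close>
definition Tmat :: "('p \<Rightarrow> nat \<Rightarrow> 's \<Rightarrow> 'a \<Rightarrow> 's \<Rightarrow> real) \<Rightarrow> 'p \<Rightarrow> nat \<Rightarrow> 'a
                    \<Rightarrow> real^'s::finite^'s" where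
  "Tmat T th h a = (\<chi> s' s. T th h s a s')"

definition Zmat :: "('p \<Rightarrow> nat \<Rightarrow> 's \<Rightarrow> 'o \<Rightarrow> real) \<Rightarrow> 'p \<Rightarrow> nat
                    \<Rightarrow> real^'s::finite^'o::finite" where
  "Zmat Z th h = (\<chi> ob s. Z th h s ob)"

definition Zdiag :: "('p \<Rightarrow> nat \<Rightarrow> 's \<Rightarrow> 'o \<Rightarrow> real) \<Rightarrow> 'p \<Rightarrow> nat \<Rightarrow> 'o
                    \<Rightarrow> real^'s::finite^'s" where
  "Zdiag Z th h ob = (\<chi> i j. if i = j then Z th h i ob else 0)"

definition Bop :: "('p \<Rightarrow> nat \<Rightarrow> 's::finite \<Rightarrow> 'a \<Rightarrow> 's \<Rightarrow> real)
                 \<Rightarrow> ('p \<Rightarrow> nat \<Rightarrow> 's \<Rightarrow> 'o::finite \<Rightarrow> real) \<Rightarrow> 'p \<Rightarrow> nat \<Rightarrow> 'a \<Rightarrow> 'o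
                 \<Rightarrow> real^'o^'o" where
  "Bop T Z th h a ob = Zmat Z th (h+1) ** Tmat T th h a ** Zdiag Z th h ob ** pinv (Zmat Z th h)"

text \<open>Bprod T Z th t [(o_t,a_t),(o_{t+1},a_{t+1}),...,(o_k,a_k)] = B_k(a_k,o_k) ... B_t(a_t,o_t).\<close>
fun Bprod :: "('p \<Rightarrow> nat \<Rightarrow> 's::finite \<Rightarrow> 'a \<Rightarrow> 's \<Rightarrow> real)
                 \<Rightarrow> ('p \<Rightarrow> nat \<Rightarrow> 's \<Rightarrow> 'o::finite \<Rightarrow> real) \<Rightarrow> 'p \<Rightarrow> nat \<Rightarrow> ('o \<times> 'a) list
                 \<Rightarrow> real^'o^'o" where
  "Bprod T Z th t [] = mat 1"
| "Bprod T Z th t ((ob, a) # xs) = Bprod T Z th (Suc t) xs ** Bop T Z th t a ob"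

text \<open>Row vector B_{H:h+1}(tau_{-h}) for tau_{-h} = [(o_{h+1},a_{h+1}),...,(o_H,a_H)]:
  e_{o_H}^T B_{H-1}(a_{H-1},o_{H-1}) ... B_{h+1}(a_{h+1},o_{h+1}).\<close>
definition Brow :: "('p \<Rightarrow> nat \<Rightarrow> 's::finite \<Rightarrow> 'a \<Rightarrow> 's \<Rightarrow> real)
                 \<Rightarrow> ('p \<Rightarrow> nat \<Rightarrow> 's \<Rightarrow> 'o::finite \<Rightarrow> real) \<Rightarrow> 'p \<Rightarrow> nat \<Rightarrow> ('o \<times> 'a) list
                 \<Rightarrow> real^'o" where
  "Brow T Z th h tm = (axis (fst (last tm)) 1) v* Bprod T Z th (h+1) (butlast tm)"

text \<open>Deterministic policy: pol t hist ob = pi_t(tau_{t-1}, o_t), hist of length t-1.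
  pol_prob pol tau = prod_{t=1}^{|tau|} 1{pi_t(tau_{t-1}, o_t) = a_t}.\<close>
definition pol_prob :: "(nat \<Rightarrow> ('o \<times> 'a) list \<Rightarrow> 'o \<Rightarrow> 'a) \<Rightarrow> ('o \<times> 'a) list \<Rightarrow> real" where
  "pol_prob pol tau = (\<Prod>t\<in>{1..length tau}.
      if pol t (take (t-1) tau) (fst (tau ! (t-1))) = snd (tau ! (t-1)) then 1 else 0)"

definition pol_cond :: "(nat \<Rightarrow> ('o \<times> 'a) list \<Rightarrow> 'o \<Rightarrow> 'a) \<Rightarrow> ('o \<times> 'a) list
                        \<Rightarrow> ('o \<times> 'a) list \<Rightarrow> real" where
  "pol_cond pol tm th = pol_prob pol (th @ tm) / pol_prob pol th"

definition norm1 :: "real^'n \<Rightarrow> real" where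
  "norm1 w = (\<Sum>i\<in>UNIV. \<bar>w $ i\<bar>)"

end

theory Submission
  imports Defs
begin

lemma transpose_dot: "(transpose A *v z) \<bullet> x = z \<bullet> ((A::real^'n^'m) *v x)"
  unfolding inner_vec_def matrix_vector_mult_def transpose_def
  by (simp add: sum_distrib_left sum_distrib_right mult.assoc mult.left_commute) (rule sum.swap)

lemma cont: "continuous_on S (\<lambda>v. (norm ((A::real^'n^'m) *v v))^2)"
  by (intro continuous_intros)

lemma quad_zero:
  fixes c d :: real
  assumes "d \<ge> 0" "\<And>t. 0 \<le> 2*t*c + t^2*d"
  shows "c = 0"
proof (rule ccontr)
  assume "c \<noteq> 0"
  define s where "s = 1/(d+1)"
  define t where "t = - (c * s)"
  have s0: "s > 0" using assms(1) unfolding s_def by simp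
  have sd: "s * d < 1" using assms(1) unfolding s_def by (simp add: field_simps)
  have "0 \<le> 2*t*c + t^2*d" by (rule assms(2))
  also have "2*t*c + t^2*d = c^2 * s * (s * d - 2)"
    unfolding t_def by (simp add: algebra_simps power2_eq_square)
  also have "\<dots> < 0" using \<open>c \<noteq> 0\<close> s0 sd
    by (intro mult_pos_neg) auto
  finally show False by simp
qed

lemma norm_add_sq: "(norm (a + t *\<^sub>R (b::'a::real_inner)))^2 = (norm a)^2 + 2*t*(a \<bullet> b) + t^2*(norm b)^2"
  unfolding power2_norm_eq_inner
  by (simp add: inner_add_left inner_add_right inner_commute[of b a] algebra_simps power2_eq_square)

lemma dot_AA: "(A *v y) \<bullet> ((A::real^'n^'m) *v x) = ((transpose A ** A) *v y) \<bullet> x"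
  by (metis transpose_dot matrix_vector_mul_assoc inner_commute)

lemma rayleigh:
  fixes A :: "real^'n^'m"
  obtains mu where "sigma_min A = sqrt mu" "mu \<ge> 0" "\<And>v. mu * (norm v)^2 \<le> (norm (A *v v))^2"
proof -
  let ?f = "\<lambda>v. (norm (A *v v))^2"
  have ne: "sphere (0::real^'n) 1 \<noteq> {}"
    using norm_axis_1[of undefined] by (metis dist_0_norm empty_iff mem_sphere)
  obtain u where u: "u \<in> sphere 0 1" and umin: "\<And>y. y \<in> sphere 0 1 \<Longrightarrow> ?f u \<le> ?f y"
    using continuous_attains_inf[OF compact_sphere ne cont] by blast
  define mu where "mu = ?f u"
  have nu: "norm u = 1" using u by simp
  have mu0: "mu \<ge> 0" unfolding mu_def by simp
  have all: "mu * (norm v)^2 \<le> (norm (A *v v))^2" for v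
  proof (cases "v = 0")
    case True then show ?thesis by simp
  next
    case False
    then have nv: "norm v > 0" by simp
    have "(inverse (norm v)) *\<^sub>R v \<in> sphere 0 1" using nv by simp
    then have "mu \<le> ?f ((inverse (norm v)) *\<^sub>R v)" unfolding mu_def by (rule umin)
    also have "\<dots> = (norm (A *v v))^2 / (norm v)^2"
      by (simp add: matrix_vector_mult_scaleR power_divide field_simps)
    finally show ?thesis using nv by (simp add: field_simps)
  qed
  define M where "M = transpose A ** A"
  have Q: "0 \<le> ?f x - mu * (norm x)^2" for x using all[of x] by simp
  have c0: "(A *v u) \<bullet> (A *v x) - mu * (u \<bullet> x) = 0" for x
  proof (rule quad_zero)
    show "0 \<le> ?f x - mu * (norm x)^2" by (rule Q)
    fix t :: real
    have "0 \<le> ?f (u + t *\<^sub>R x) - mu * (norm (u + t *\<^sub>R x))^2" by (rule Q)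
    also have "?f (u + t *\<^sub>R x) - mu * (norm (u + t *\<^sub>R x))^2
        = (?f u - mu * (norm u)^2) + 2 * t * ((A *v u) \<bullet> (A *v x) - mu * (u \<bullet> x))
          + t^2 * (?f x - mu * (norm x)^2)"
      by (simp add: matrix_vector_right_distrib matrix_vector_mult_scaleR norm_add_sq algebra_simps)
    also have "?f u - mu * (norm u)^2 = 0" using nu unfolding mu_def by simp
    finally show "0 \<le> 2 * t * ((A *v u) \<bullet> (A *v x) - mu * (u \<bullet> x))
          + t^2 * (?f x - mu * (norm x)^2)" by simp
  qed
  have "(M *v u - mu *\<^sub>R u) \<bullet> x = 0" for x
    using c0[of x] unfolding M_def by (simp add: inner_diff_left dot_AA)
  from this[of "M *v u - mu *\<^sub>R u"] have eig: "M *v u = mu *\<^sub>R u" by simp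
  define E where "E = {l. \<exists>v. v \<noteq> 0 \<and> (transpose A ** A) *v v = l *\<^sub>R v}"
  have muE: "mu \<in> E" unfolding E_def M_def[symmetric] using eig nu by (intro CollectI exI[of _ u]) auto
  have geE: "mu \<le> l" if "l \<in> E" for l
  proof -
    have "\<exists>v. v \<noteq> 0 \<and> M *v v = l *\<^sub>R v" using that unfolding E_def M_def by simp
    then obtain v where v: "v \<noteq> 0" "M *v v = l *\<^sub>R v" by blast
    have "l * (norm v)^2 = l * (v \<bullet> v)" by (simp only: power2_norm_eq_inner)
    also have "\<dots> = (M *v v) \<bullet> v" using v by simp
    also have "\<dots> = (A *v v) \<bullet> (A *v v)" unfolding M_def by (rule dot_AA[symmetric])
    also have "\<dots> = (norm (A *v v))^2" by (simp only: power2_norm_eq_inner)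
    finally have "mu * (norm v)^2 \<le> l * (norm v)^2" using all[of v] by linarith
    moreover have "(norm v)^2 > 0" using v by simp
    ultimately show ?thesis by (rule mult_right_le_imp_le)
  qed
  define e where "e l = (SOME v. v \<noteq> 0 \<and> M *v v = l *\<^sub>R v)" for l
  have e: "e l \<noteq> 0 \<and> M *v e l = l *\<^sub>R e l" if "l \<in> E" for l
    unfolding e_def by (rule someI_ex) (use that in \<open>auto simp: E_def M_def\<close>)
  have orth: "e l \<bullet> e l' = 0" if "l \<in> E" "l' \<in> E" "l \<noteq> l'" for l l'
  proof -
    have "l * (e l \<bullet> e l') = (M *v e l) \<bullet> e l'" using e[OF that(1)] by simp
    also have "\<dots> = (A *v e l) \<bullet> (A *v e l')" unfolding M_def by (rule dot_AA[symmetric])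
    also have "\<dots> = (M *v e l') \<bullet> e l" unfolding M_def by (metis dot_AA inner_commute)
    also have "\<dots> = l' * (e l \<bullet> e l')" using e[OF that(2)] by (simp add: inner_commute[of "e l'" "e l"])
    finally show ?thesis using that(3) by (metis mult_right_cancel)
  qed
  have inj: "inj_on e E"
  proof (rule inj_onI)
    fix l l' assume "l \<in> E" "l' \<in> E" "e l = e l'"
    then show "l = l'" using orth[of l l'] e[of l] by fastforce
  qed
  have "pairwise orthogonal (e ` E)"
    unfolding pairwise_def orthogonal_def using orth by fastforce
  moreover have "0 \<notin> e ` E" using e by fastforce
  ultimately have "independent (e ` E)" by (rule pairwise_orthogonal_independent)
  then have "finite (e ` E)" using independent_bound by blast
  then have fin: "finite E" using inj finite_imageD by blast
  have "Min E = mu" by (rule Min_eqI[OF fin]) (use geE muE in auto)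
  then have "sigma_min A = sqrt mu" unfolding sigma_min_def E_def by simp
  then show ?thesis using that mu0 all by blast
qed

lemma sq_le_helper: "(a::real)^2 \<le> b * a \<Longrightarrow> 0 \<le> a \<Longrightarrow> 0 \<le> b \<Longrightarrow> a \<le> b"
  by (cases "a = 0") (auto simp: power2_eq_square intro: mult_right_le_imp_le)

lemma pinv_props:
  fixes A :: "real^'n^'m" and alpha :: real
  assumes apos: "alpha > 0" and low: "\<And>v. alpha * norm v \<le> norm (A *v v)"
  shows "pinv A ** A = mat 1" "\<And>w. alpha * norm (pinv A *v w) \<le> norm w"
proof -
  have inj: "v = 0" if "A *v v = 0" for v
    using low[of v] that apos by (simp add: mult_le_0_iff)
  define M where "M = transpose A ** A"
  have "\<forall>x. M *v x = 0 \<longrightarrow> x = 0"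
  proof (intro allI impI)
    fix x assume "M *v x = 0"
    then have "(A *v x) \<bullet> (A *v x) = 0" unfolding M_def by (simp add: dot_AA)
    then show "x = 0" using inj by simp
  qed
  then have "invertible M" by (simp add: invertible_left_inverse matrix_left_invertible_ker)
  then obtain Mi where Mi: "M ** Mi = mat 1" "Mi ** M = mat 1" unfolding invertible_def by blast
  have Mt: "transpose M = M" unfolding M_def by (simp add: matrix_transpose_mul)
  have tM: "transpose Mi ** M = mat 1"
  proof -
    have "transpose Mi ** M = transpose Mi ** transpose M" by (simp only: Mt)
    also have "\<dots> = transpose (M ** Mi)" by (simp only: matrix_transpose_mul)
    also have "\<dots> = mat 1" by (simp only: Mi(1) transpose_mat)
    finally show ?thesis .
  qed
  have Mit: "transpose Mi = Mi"
  proof -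
    have "transpose Mi = transpose Mi ** (M ** Mi)" by (simp only: Mi(1) matrix_mul_rid)
    also have "\<dots> = (transpose Mi ** M) ** Mi" by (simp only: matrix_mul_assoc)
    also have "\<dots> = Mi" by (simp only: tM matrix_mul_lid)
    finally show ?thesis .
  qed
  define X where "X = Mi ** transpose A"
  have XA: "X ** A = mat 1" unfolding X_def using Mi(2) by (simp add: matrix_mul_assoc M_def)
  have P1: "A ** X ** A = A" by (simp only: XA matrix_mul_rid flip: matrix_mul_assoc)
  have P2: "X ** A ** X = X" by (simp add: XA)
  have P3: "transpose (A ** X) = A ** X"
    unfolding X_def by (simp add: matrix_transpose_mul Mit matrix_mul_assoc)
  have P4: "transpose (X ** A) = X ** A" by (simp add: XA transpose_mat)
  have uniq: "Y = X" if Y: "A ** Y ** A = A \<and> Y ** A ** Y = Y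
        \<and> transpose (A ** Y) = A ** Y \<and> transpose (Y ** A) = Y ** A" for Y
  proof -
    have YA: "Y ** A = mat 1"
    proof -
      have "(Y ** A) *v v = v" for v
      proof -
        have "A *v ((Y ** A) *v v - v) = 0"
        proof -
          have "A ** (Y ** A) = A" using Y by (simp add: matrix_mul_assoc)
          then show ?thesis by (simp add: matrix_vector_mult_diff_distrib matrix_vector_mul_assoc)
        qed
        then have "(Y ** A) *v v - v = 0" by (rule inj)
        then show ?thesis by simp
      qed
      then show ?thesis by (simp add: matrix_eq)
    qed
    have "M ** Y = transpose A ** transpose (A ** Y)" unfolding M_def using Y by (simp add: matrix_mul_assoc)
    also have "\<dots> = transpose (Y ** A) ** transpose A" by (simp add: matrix_transpose_mul matrix_mul_assoc)
    also have "\<dots> = transpose A" by (simp add: YA transpose_mat)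
    finally have "M ** Y = transpose A" .
    then have "Mi ** M ** Y = X" unfolding X_def by (simp flip: matrix_mul_assoc)
    then show ?thesis using Mi(2) by simp
  qed
  have pA: "pinv A = X" unfolding pinv_def
  proof (rule the_equality)
    show "A ** X ** A = A \<and> X ** A ** X = X \<and> transpose (A ** X) = A ** X \<and> transpose (X ** A) = X ** A"
      using P1 P2 P3 P4 by blast
  next
    fix Y assume "A ** Y ** A = A \<and> Y ** A ** Y = Y \<and> transpose (A ** Y) = A ** Y \<and> transpose (Y ** A) = Y ** A"
    then show "Y = X" by (rule uniq)
  qed
  show "pinv A ** A = mat 1" using pA XA by simp
  fix w
  define x where "x = X *v w"
  have Mx: "M *v x = transpose A *v w"
    unfolding x_def X_def by (simp only: matrix_vector_mul_assoc matrix_mul_assoc Mi(1) matrix_mul_lid)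
  have "(norm (A *v x))^2 = (A *v x) \<bullet> (A *v x)" by (simp only: power2_norm_eq_inner)
  also have "\<dots> = (M *v x) \<bullet> x" unfolding M_def by (rule dot_AA)
  also have "\<dots> = w \<bullet> (A *v x)" unfolding Mx by (rule transpose_dot)
  also have "\<dots> \<le> norm w * norm (A *v x)" by (rule Cauchy_Schwarz_ineq2[THEN abs_le_D1])
  finally have "norm (A *v x) \<le> norm w"
    using norm_ge_zero[of "A *v x"] norm_ge_zero[of w] by (rule sq_le_helper)
  then show "alpha * norm (pinv A *v w) \<le> norm w" using low[of x] pA x_def by simp
qed

lemma sum_lists_Suc:
  "(\<Sum>xs\<in>{xs::'b::finite list. length xs = Suc n}. f xs) =
   (\<Sum>p\<in>UNIV. \<Sum>xs\<in>{xs. length xs = n}. f (p # xs))"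
proof -
  have eq: "{xs::'b list. length xs = Suc n} = (\<lambda>(p,xs). p#xs) ` (UNIV \<times> {xs. length xs = n})"
    by (auto simp: length_Suc_conv image_iff)
  have inj: "inj_on (\<lambda>(p::'b,xs). p#xs) (UNIV \<times> {xs. length xs = n})"
    by (auto simp: inj_on_def)
  have "(\<Sum>xs\<in>{xs::'b list. length xs = Suc n}. f xs) = (\<Sum>(p,xs)\<in>UNIV \<times> {xs. length xs = n}. f (p#xs))"
    unfolding eq by (subst sum.reindex[OF inj]) (simp add: case_prod_beta)
  also have "\<dots> = (\<Sum>p\<in>UNIV. \<Sum>xs\<in>{xs. length xs = n}. f (p # xs))"
    by (rule sum.cartesian_product[symmetric])
  finally show ?thesis .
qed

lemma pol_prob_snoc:
  "pol_prob pol (hist @ [p]) = pol_prob pol hist * (if pol (Suc (length hist)) hist (fst p) = snd p then 1 else 0)"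
proof -
  have "pol_prob pol (hist @ [p]) = (\<Prod>t\<in>{1..Suc (length hist)}.
      if pol t (take (t-1) (hist @ [p])) (fst ((hist @ [p]) ! (t-1))) = snd ((hist @ [p]) ! (t-1)) then 1 else (0::real))"
    unfolding pol_prob_def by simp
  also have "\<dots> = (if pol (Suc (length hist)) hist (fst p) = snd p then 1 else 0) *
      (\<Prod>t\<in>{1..length hist}.
      if pol t (take (t-1) (hist @ [p])) (fst ((hist @ [p]) ! (t-1))) = snd ((hist @ [p]) ! (t-1)) then 1 else (0::real))"
    by (subst prod.cl_ivl_Suc) simp
  also have "(\<Prod>t\<in>{1..length hist}.
      if pol t (take (t-1) (hist @ [p])) (fst ((hist @ [p]) ! (t-1))) = snd ((hist @ [p]) ! (t-1)) then 1 else (0::real))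
      = pol_prob pol hist"
    unfolding pol_prob_def by (rule prod.cong) (auto simp: nth_append)
  finally show ?thesis by simp
qed

lemma pol_prob_nonneg: "pol_prob pol tau \<ge> 0"
  unfolding pol_prob_def by (rule prod_nonneg) simp

lemma sum_UNIV_pair: "(\<Sum>p\<in>UNIV. F p) = (\<Sum>x\<in>UNIV. \<Sum>y\<in>UNIV. F (x,y))"
proof -
  have "(\<Sum>x\<in>UNIV. \<Sum>y\<in>UNIV. F (x,y)) = (\<Sum>(x,y)\<in>UNIV\<times>UNIV. F (x,y))" by (rule sum.cartesian_product)
  then show ?thesis by (simp add: case_prod_eta)
qed

lemma sum_pol_pairs:
  fixes pol :: "nat \<Rightarrow> ('o::finite \<times> 'a::finite) list \<Rightarrow> 'o \<Rightarrow> 'a"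
  shows "(\<Sum>p\<in>UNIV. pol_prob pol (hist @ [p]) * G p) =
         pol_prob pol hist * (\<Sum>ob\<in>UNIV. G (ob, pol (Suc (length hist)) hist ob))"
proof -
  have "(\<Sum>p\<in>UNIV. pol_prob pol (hist @ [p]) * G p) =
        (\<Sum>ob\<in>UNIV. \<Sum>a\<in>UNIV. pol_prob pol hist * ((if pol (Suc (length hist)) hist ob = a then 1 else 0) * G (ob,a)))"
    by (subst sum_UNIV_pair) (simp add: pol_prob_snoc mult.assoc)
  also have "\<dots> = (\<Sum>ob\<in>UNIV. pol_prob pol hist * G (ob, pol (Suc (length hist)) hist ob))"
  proof (intro sum.cong refl)
    fix ob
    have "(\<Sum>a\<in>UNIV. (if pol (Suc (length hist)) hist ob = a then 1 else 0) * G (ob,a))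
        = (\<Sum>a\<in>UNIV. if pol (Suc (length hist)) hist ob = a then G (ob,a) else 0)"
      by (intro sum.cong refl) simp
    also have "\<dots> = G (ob, pol (Suc (length hist)) hist ob)" by (simp add: sum.delta)
    finally show "(\<Sum>a\<in>UNIV. pol_prob pol hist * ((if pol (Suc (length hist)) hist ob = a then 1 else 0) * G (ob,a)))
       = pol_prob pol hist * G (ob, pol (Suc (length hist)) hist ob)"
      by (simp only: sum_distrib_left[symmetric])
  qed
  finally show ?thesis by (simp add: sum_distrib_left)
qed

lemma stoch_norm1:
  fixes K :: "'c::finite \<Rightarrow> 'r::finite \<Rightarrow> real"
  assumes nn: "\<And>c r. K c r \<ge> 0" and sm: "\<And>c. (\<Sum>r\<in>UNIV. K c r) = 1"
  shows "norm1 ((\<chi> r c. K c r) *v y) \<le> norm1 y"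
proof -
  have "norm1 ((\<chi> r c. K c r) *v y) = (\<Sum>r\<in>UNIV. \<bar>\<Sum>c\<in>UNIV. K c r * y $ c\<bar>)"
    unfolding norm1_def matrix_vector_mult_def by simp
  also have "\<dots> \<le> (\<Sum>r\<in>UNIV. \<Sum>c\<in>UNIV. K c r * \<bar>y $ c\<bar>)"
  proof (rule sum_mono)
    fix r
    have "\<bar>\<Sum>c\<in>UNIV. K c r * y $ c\<bar> \<le> (\<Sum>c\<in>UNIV. \<bar>K c r * y $ c\<bar>)" by (rule sum_abs)
    also have "\<dots> = (\<Sum>c\<in>UNIV. K c r * \<bar>y $ c\<bar>)" using nn by (simp add: abs_mult)
    finally show "\<bar>\<Sum>c\<in>UNIV. K c r * y $ c\<bar> \<le> (\<Sum>c\<in>UNIV. K c r * \<bar>y $ c\<bar>)" .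
  qed
  also have "\<dots> = (\<Sum>c\<in>UNIV. \<Sum>r\<in>UNIV. K c r * \<bar>y $ c\<bar>)" by (rule sum.swap)
  also have "\<dots> = (\<Sum>c\<in>UNIV. \<bar>y $ c\<bar>)" by (simp add: sum_distrib_right[symmetric] sm)
  finally show ?thesis unfolding norm1_def .
qed

lemma diag_apply: "((\<chi> i j. if i = j then d i else 0) *v y) = (\<chi> i. d i * (y $ i :: real))"
proof -
  have "(\<Sum>j\<in>UNIV. (if i = j then d i else 0) * y $ j) = d i * y $ i" for i
  proof -
    have "(\<Sum>j\<in>UNIV. (if i = j then d i else 0) * y $ j) = (\<Sum>j\<in>UNIV. if i = j then d i * y $ j else 0)"
      by (intro sum.cong refl) simp
    also have "\<dots> = d i * y $ i" by (simp add: sum.delta)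
    finally show ?thesis .
  qed
  then show ?thesis unfolding matrix_vector_mult_def by (simp add: vec_eq_iff)
qed

lemma stoch_step:
  fixes Tk :: "'s::finite \<Rightarrow> 'a \<Rightarrow> 's \<Rightarrow> real" and Zk :: "'s \<Rightarrow> 'o::finite \<Rightarrow> real"
  assumes Tn: "\<And>s a s'. Tk s a s' \<ge> 0" and Ts: "\<And>s a. (\<Sum>s'\<in>UNIV. Tk s a s') = 1"
    and Zn: "\<And>s ob. Zk s ob \<ge> 0" and Zs: "\<And>s. (\<Sum>ob\<in>UNIV. Zk s ob) = 1"
  shows "(\<Sum>ob\<in>UNIV. norm1 ((\<chi> s' s. Tk s (f ob) s') *v ((\<chi> i j. if i = j then Zk i ob else 0) *v y)))
         \<le> norm1 y"
proof -
  have "(\<Sum>ob\<in>UNIV. norm1 ((\<chi> s' s. Tk s (f ob) s') *v ((\<chi> i j. if i = j then Zk i ob else 0) *v y)))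
      \<le> (\<Sum>ob\<in>UNIV. norm1 ((\<chi> i j. if i = j then Zk i ob else 0) *v y))"
    by (intro sum_mono stoch_norm1[where K="\<lambda>s s'. Tk s (f _) s'"] Tn Ts)
  also have "\<dots> = (\<Sum>ob\<in>UNIV. \<Sum>s\<in>UNIV. Zk s ob * \<bar>y $ s\<bar>)"
    unfolding diag_apply norm1_def using Zn by (simp add: abs_mult)
  also have "\<dots> = (\<Sum>s\<in>UNIV. \<Sum>ob\<in>UNIV. Zk s ob * \<bar>y $ s\<bar>)" by (rule sum.swap)
  also have "\<dots> = norm1 y" unfolding norm1_def by (simp add: sum_distrib_right[symmetric] Zs)
  finally show ?thesis .
qed

fun Cm :: "('p \<Rightarrow> nat \<Rightarrow> 's::finite \<Rightarrow> 'a \<Rightarrow> 's \<Rightarrow> real) \<Rightarrow> ('p \<Rightarrow> nat \<Rightarrow> 's \<Rightarrow> 'o \<Rightarrow> real)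
    \<Rightarrow> 'p \<Rightarrow> nat \<Rightarrow> ('o \<times> 'a) list \<Rightarrow> real^'s^'s" where
  "Cm T Z th t [] = mat 1"
| "Cm T Z th t ((ob, a) # xs) = Cm T Z th (Suc t) xs ** Tmat T th t a ** Zdiag Z th t ob"

lemma BZ:
  fixes T :: "'p \<Rightarrow> nat \<Rightarrow> 's::finite \<Rightarrow> 'a \<Rightarrow> 's \<Rightarrow> real" and Z :: "'p \<Rightarrow> nat \<Rightarrow> 's \<Rightarrow> 'o::finite \<Rightarrow> real"
  assumes "\<And>k. t \<le> k \<Longrightarrow> k < t + length xs \<Longrightarrow> pinv (Zmat Z th k) ** Zmat Z th k = mat 1"
  shows "Bprod T Z th t xs ** Zmat Z th t = Zmat Z th (t + length xs) ** Cm T Z th t xs"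
  using assms
proof (induction xs arbitrary: t)
  case Nil
  then show ?case by simp
next
  case (Cons p xs)
  obtain ob a where p: "p = (ob, a)" by (cases p)
  have P: "pinv (Zmat Z th t) ** Zmat Z th t = mat 1" using Cons.prems[of t] by simp
  have IH: "Bprod T Z th (Suc t) xs ** Zmat Z th (Suc t) = Zmat Z th (Suc t + length xs) ** Cm T Z th (Suc t) xs"
    using Cons.prems by (intro Cons.IH) auto
  have B: "Bop T Z th t a ob ** Zmat Z th t = Zmat Z th (Suc t) ** (Tmat T th t a ** Zdiag Z th t ob)"
    unfolding Bop_def by (simp add: P flip: matrix_mul_assoc)
  have "Bprod T Z th t (p # xs) ** Zmat Z th t = Bprod T Z th (Suc t) xs ** (Bop T Z th t a ob ** Zmat Z th t)"
    by (simp add: p matrix_mul_assoc)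
  also have "\<dots> = (Bprod T Z th (Suc t) xs ** Zmat Z th (Suc t)) ** (Tmat T th t a ** Zdiag Z th t ob)"
    unfolding B by (simp only: matrix_mul_assoc)
  also have "\<dots> = Zmat Z th (t + length (p # xs)) ** Cm T Z th t (p # xs)"
    unfolding IH p by (simp add: matrix_mul_assoc)
  finally show ?case .
qed

lemma BP:
  fixes T :: "'p \<Rightarrow> nat \<Rightarrow> 's::finite \<Rightarrow> 'a \<Rightarrow> 's \<Rightarrow> real" and Z :: "'p \<Rightarrow> nat \<Rightarrow> 's \<Rightarrow> 'o::finite \<Rightarrow> real"
  assumes "xs \<noteq> []" and P: "pinv (Zmat Z th t) ** Zmat Z th t = mat 1"
  shows "Bprod T Z th t xs ** Zmat Z th t ** pinv (Zmat Z th t) = Bprod T Z th t xs"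
proof -
  obtain ob a ys where xs: "xs = (ob, a) # ys" using assms(1) by (metis list.exhaust surj_pair)
  have PQ: "pinv (Zmat Z th t) ** (Zmat Z th t ** Q) = Q" for Q :: "real^'o^'s"
    by (simp add: matrix_mul_assoc P)
  show ?thesis by (simp add: xs Bop_def PQ flip: matrix_mul_assoc)
qed

lemma main_sum:
  fixes T :: "'p \<Rightarrow> nat \<Rightarrow> 's::finite \<Rightarrow> 'a::finite \<Rightarrow> 's \<Rightarrow> real"
    and Z :: "'p \<Rightarrow> nat \<Rightarrow> 's \<Rightarrow> 'o::finite \<Rightarrow> real"
    and pol :: "nat \<Rightarrow> ('o \<times> 'a) list \<Rightarrow> 'o \<Rightarrow> 'a"
  assumes Tn: "\<And>k s a s'. 1 \<le> k \<Longrightarrow> k < H \<Longrightarrow> T th k s a s' \<ge> 0"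
    and Ts: "\<And>k s a. 1 \<le> k \<Longrightarrow> k < H \<Longrightarrow> (\<Sum>s'\<in>UNIV. T th k s a s') = 1"
    and Zn: "\<And>k s ob. 1 \<le> k \<Longrightarrow> k \<le> H \<Longrightarrow> Z th k s ob \<ge> 0"
    and Zs: "\<And>k s. 1 \<le> k \<Longrightarrow> k \<le> H \<Longrightarrow> (\<Sum>ob\<in>UNIV. Z th k s ob) = 1"
  shows "1 \<le> n \<Longrightarrow> t + n = Suc H \<Longrightarrow> 1 \<le> t \<Longrightarrow>
    (\<Sum>xs\<in>{xs. length xs = n}. pol_prob pol (hist @ xs) *
        \<bar>((Zmat Z th H ** Cm T Z th t (butlast xs)) *v y) $ fst (last xs)\<bar>)
    \<le> pol_prob pol hist * norm1 y"
proof (induction n arbitrary: t hist y)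
  case 0
  then show ?case by simp
next
  case (Suc m)
  show ?case
  proof (cases "m = 0")
    case True
    have H1: "1 \<le> H" using Suc.prems True by simp
    have "(\<Sum>xs\<in>{xs. length xs = Suc m}. pol_prob pol (hist @ xs) *
        \<bar>((Zmat Z th H ** Cm T Z th t (butlast xs)) *v y) $ fst (last xs)\<bar>)
      = (\<Sum>p\<in>UNIV. pol_prob pol (hist @ [p]) * \<bar>(Zmat Z th H *v y) $ fst p\<bar>)"
      unfolding sum_lists_Suc True by simp
    also have "\<dots> = pol_prob pol hist * (\<Sum>ob\<in>UNIV. \<bar>(Zmat Z th H *v y) $ ob\<bar>)"
      using sum_pol_pairs[where G="\<lambda>p. \<bar>(Zmat Z th H *v y) $ fst p\<bar>" and pol=pol and hist=hist] by simp
    also have "\<dots> \<le> pol_prob pol hist * norm1 y"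
    proof (rule mult_left_mono)
      show "(\<Sum>ob\<in>UNIV. \<bar>(Zmat Z th H *v y) $ ob\<bar>) \<le> norm1 y"
        unfolding Zmat_def norm1_def[symmetric]
        by (rule stoch_norm1) (use Zn Zs H1 in auto)
      show "0 \<le> pol_prob pol hist" by (rule pol_prob_nonneg)
    qed
    finally show ?thesis .
  next
    case False
    have tH: "1 \<le> t" "t < H" using Suc.prems False by auto
    define y' where "y' p = Tmat T th t (snd p) *v (Zdiag Z th t (fst p) *v y)" for p
    have inner: "(\<Sum>xs\<in>{xs. length xs = m}. pol_prob pol (hist @ p # xs) *
        \<bar>((Zmat Z th H ** Cm T Z th t (butlast (p # xs))) *v y) $ fst (last (p # xs))\<bar>)
      \<le> pol_prob pol (hist @ [p]) * norm1 (y' p)" for p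
    proof -
      obtain ob a where p: "p = (ob, a)" by (cases p)
      have "(\<Sum>xs\<in>{xs. length xs = m}. pol_prob pol (hist @ p # xs) *
          \<bar>((Zmat Z th H ** Cm T Z th t (butlast (p # xs))) *v y) $ fst (last (p # xs))\<bar>)
        = (\<Sum>xs\<in>{xs. length xs = m}. pol_prob pol ((hist @ [p]) @ xs) *
          \<bar>((Zmat Z th H ** Cm T Z th (Suc t) (butlast xs)) *v y' p) $ fst (last xs)\<bar>)"
      proof (intro sum.cong refl)
        fix xs :: "('o \<times> 'a) list" assume "xs \<in> {xs. length xs = m}"
        then have "xs \<noteq> []" using False by auto
        then show "pol_prob pol (hist @ p # xs) *
          \<bar>((Zmat Z th H ** Cm T Z th t (butlast (p # xs))) *v y) $ fst (last (p # xs))\<bar> =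
          pol_prob pol ((hist @ [p]) @ xs) *
          \<bar>((Zmat Z th H ** Cm T Z th (Suc t) (butlast xs)) *v y' p) $ fst (last xs)\<bar>"
          by (simp add: p y'_def matrix_vector_mul_assoc matrix_mul_assoc)
      qed
      also have "\<dots> \<le> pol_prob pol (hist @ [p]) * norm1 (y' p)"
        using Suc.prems False by (intro Suc.IH) auto
      finally show ?thesis .
    qed
    have "(\<Sum>xs\<in>{xs. length xs = Suc m}. pol_prob pol (hist @ xs) *
        \<bar>((Zmat Z th H ** Cm T Z th t (butlast xs)) *v y) $ fst (last xs)\<bar>)
      \<le> (\<Sum>p\<in>UNIV. pol_prob pol (hist @ [p]) * norm1 (y' p))"
      unfolding sum_lists_Suc by (intro sum_mono inner)
    also have "\<dots> = pol_prob pol hist * (\<Sum>ob\<in>UNIV. norm1 (y' (ob, pol (Suc (length hist)) hist ob)))"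
      by (rule sum_pol_pairs[where G="\<lambda>p. norm1 (y' p)"])
    also have "\<dots> \<le> pol_prob pol hist * norm1 y"
    proof (rule mult_left_mono)
      show "(\<Sum>ob\<in>UNIV. norm1 (y' (ob, pol (Suc (length hist)) hist ob))) \<le> norm1 y"
        unfolding y'_def Tmat_def Zdiag_def fst_conv snd_conv
        by (rule stoch_step) (use Tn Ts Zn Zs tH in auto)
      show "0 \<le> pol_prob pol hist" by (rule pol_prob_nonneg)
    qed
    finally show ?thesis .
  qed
qed

lemma brow_dot: "(axis i 1 v* M) \<bullet> w = ((M::real^'o^'o) *v w) $ i"
proof -
  have "axis i 1 v* M = transpose M *v axis i 1" by (simp only: transpose_matrix_vector)
  then have "(axis i 1 v* M) \<bullet> w = axis i 1 \<bullet> (M *v w)" by (simp only: transpose_dot)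
  then show ?thesis by (simp add: inner_axis')
qed

lemma l1_l2: "norm1 (x::real^'n) \<le> sqrt (real CARD('n)) * norm x"
proof -
  have CS: "(\<Sum>i\<in>(UNIV::'n set). \<bar>x$i\<bar> * \<bar>1::real\<bar>) \<le> L2_set (\<lambda>i. x$i) UNIV * L2_set (\<lambda>i::'n. 1::real) UNIV"
    by (rule L2_set_mult_ineq)
  have "norm1 x = (\<Sum>i\<in>(UNIV::'n set). \<bar>x$i\<bar> * \<bar>1::real\<bar>)" by (simp add: norm1_def)
  also note CS
  also have "L2_set (\<lambda>i. x$i) UNIV = norm x" by (simp add: norm_vec_def L2_set_def)
  also have "L2_set (\<lambda>i::'n. 1::real) UNIV = sqrt (real CARD('n))" by (simp add: L2_set_def)
  finally show ?thesis by (simp add: mult.commute)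
qed

lemma norm_le_norm1: "norm (x::real^'n) \<le> norm1 x"
  unfolding norm1_def by (rule norm_le_l1_cart)

lemma norm1_nonneg: "norm1 (x::real^'n) \<ge> 0"
  unfolding norm1_def by (simp add: sum_nonneg)

theorem lemma14:
  fixes T :: "'p \<Rightarrow> nat \<Rightarrow> 's::finite \<Rightarrow> 'a::finite \<Rightarrow> 's \<Rightarrow> real"
    and Z :: "'p \<Rightarrow> nat \<Rightarrow> 's \<Rightarrow> 'o::finite \<Rightarrow> real"
    and Theta :: "'p set"
    and H h :: nat and alpha :: real
    and pol :: "nat \<Rightarrow> ('o \<times> 'a) list \<Rightarrow> 'o \<Rightarrow> 'a"
    and tauh :: "('o \<times> 'a) list" and th :: 'p and w :: "real^'o"
  assumes T_dist: "\<And>th' k s a s'. th' \<in> Theta \<Longrightarrow> k \<in> {1..<H} \<Longrightarrow> T th' k s a s' \<ge> 0"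
    and T_sum: "\<And>th' k s a. th' \<in> Theta \<Longrightarrow> k \<in> {1..<H} \<Longrightarrow> (\<Sum>s'\<in>UNIV. T th' k s a s') = 1"
    and Z_dist: "\<And>th' k s ob. th' \<in> Theta \<Longrightarrow> k \<in> {1..H} \<Longrightarrow> Z th' k s ob \<ge> 0"
    and Z_sum: "\<And>th' k s. th' \<in> Theta \<Longrightarrow> k \<in> {1..H} \<Longrightarrow> (\<Sum>ob\<in>UNIV. Z th' k s ob) = 1"
    and alpha_pos: "alpha > 0"
    and undercomplete: "CARD('o) \<ge> CARD('s)"
    and revealing: "\<And>th' k. th' \<in> Theta \<Longrightarrow> k \<in> {1..H} \<Longrightarrow> sigma_min (Zmat Z th' k) \<ge> alpha"
    and h_lt: "h < H"
    and tauh_len: "length tauh = h"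
    and pol_pos: "pol_prob pol tauh > 0"
    and th_in: "th \<in> Theta"
  shows "(\<Sum>tm\<in>{tm :: ('o \<times> 'a) list. length tm = H - h}.
            pol_cond pol tm tauh * \<bar>Brow T Z th h tm \<bullet> w\<bar>)
         \<le> sqrt (real CARD('s)) / alpha * norm1 w"
proof -
  define p where "p = pol_prob pol tauh"
  have p0: "p > 0" using pol_pos p_def by simp
  have Tn: "\<And>k s a s'. 1 \<le> k \<Longrightarrow> k < H \<Longrightarrow> T th k s a s' \<ge> 0" using T_dist th_in by auto
  have Ts: "\<And>k s a. 1 \<le> k \<Longrightarrow> k < H \<Longrightarrow> (\<Sum>s'\<in>UNIV. T th k s a s') = 1" using T_sum th_in by auto
  have Zn: "\<And>k s ob. 1 \<le> k \<Longrightarrow> k \<le> H \<Longrightarrow> Z th k s ob \<ge> 0" using Z_dist th_in by auto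
  have Zs: "\<And>k s. 1 \<le> k \<Longrightarrow> k \<le> H \<Longrightarrow> (\<Sum>ob\<in>UNIV. Z th k s ob) = 1" using Z_sum th_in by auto
  have low: "alpha * norm v \<le> norm (Zmat Z th k *v v)" if k: "1 \<le> k" "k \<le> H" for k v
  proof -
    obtain mu where mu: "sigma_min (Zmat Z th k) = sqrt mu" "mu \<ge> 0"
      "\<And>v. mu * (norm v)^2 \<le> (norm (Zmat Z th k *v v))^2" using rayleigh[of "Zmat Z th k"] by blast
    have "alpha \<le> sqrt mu" using revealing[OF th_in, of k] k mu(1) by simp
    then have "alpha^2 \<le> mu" using alpha_pos mu(2)
      by (metis less_le power_mono real_sqrt_pow2 sqrt_ge_absD abs_of_nonneg)
    then have "(alpha * norm v)^2 \<le> (norm (Zmat Z th k *v v))^2"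
      using mu(3)[of v] by (simp add: power_mult_distrib) (meson mult_right_mono order_trans zero_le_power2)
    then show ?thesis by (rule power2_le_imp_le) simp
  qed
  have PZ: "pinv (Zmat Z th k) ** Zmat Z th k = mat 1" if "1 \<le> k" "k \<le> H" for k
    using pinv_props(1)[OF alpha_pos low] that by blast
  have a1: "alpha \<le> 1"
  proof -
    obtain mu where mu: "sigma_min (Zmat Z th H) = sqrt mu" "mu \<ge> 0"
      "\<And>v. mu * (norm v)^2 \<le> (norm (Zmat Z th H *v v))^2" using rayleigh[of "Zmat Z th H"] by blast
    have H1: "1 \<le> H" using h_lt by simp
    obtain s0 :: 's where True by simp
    have col: "Zmat Z th H *v axis s0 1 = (\<chi> ob. Z th H s0 ob)"
      unfolding Zmat_def matrix_vector_mult_def axis_def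
      by (simp add: vec_eq_iff if_distrib[of "\<lambda>x. _ * x"] sum.delta cong: if_cong)
    have "(norm (Zmat Z th H *v axis s0 1))^2 = (\<Sum>ob\<in>UNIV. Z th H s0 ob * Z th H s0 ob)"
      unfolding col power2_norm_eq_inner inner_vec_def by simp
    also have "\<dots> \<le> (\<Sum>ob\<in>UNIV. Z th H s0 ob)"
    proof (rule sum_mono)
      fix ob
      have "Z th H s0 ob \<le> (\<Sum>ob\<in>UNIV. Z th H s0 ob)"
        by (rule member_le_sum) (use Zn H1 in auto)
      then have "Z th H s0 ob \<le> 1" using Zs[OF H1 order_refl] by simp
      then show "Z th H s0 ob * Z th H s0 ob \<le> Z th H s0 ob"
        using Zn[OF H1 order_refl] by (simp add: mult_left_le)
    qed
    also have "\<dots> = 1" using Zs[OF H1 order_refl] .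
    finally have "mu \<le> 1" using mu(3)[of "axis s0 1"] by (simp add: norm_axis_1)
    then have s1: "sqrt mu \<le> 1" by simp
    have "alpha \<le> sqrt mu" using revealing[OF th_in, of H] H1 mu(1) by simp
    then show ?thesis using s1 by linarith
  qed
  have cS: "1 \<le> sqrt (real CARD('s))" by simp
  have coef: "1 \<le> sqrt (real CARD('s)) / alpha"
  proof -
    have "alpha \<le> sqrt (real CARD('s))" using a1 cS by linarith
    then show ?thesis using alpha_pos by (simp add: field_simps)
  qed
  have LHS: "(\<Sum>tm\<in>{tm :: ('o \<times> 'a) list. length tm = H - h}.
            pol_cond pol tm tauh * \<bar>Brow T Z th h tm \<bullet> w\<bar>)
      = (\<Sum>tm\<in>{tm :: ('o \<times> 'a) list. length tm = H - h}.
            pol_prob pol (tauh @ tm) * \<bar>Brow T Z th h tm \<bullet> w\<bar>) / p"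
    unfolding pol_cond_def p_def by (simp add: sum_divide_distrib)
  show ?thesis
  proof (cases "Suc h = H")
    case True
    then have n1: "H - h = Suc 0" by simp
    have "(\<Sum>tm\<in>{tm :: ('o \<times> 'a) list. length tm = H - h}.
            pol_prob pol (tauh @ tm) * \<bar>Brow T Z th h tm \<bullet> w\<bar>)
        = (\<Sum>q\<in>UNIV. pol_prob pol (tauh @ [q]) * \<bar>w $ fst q\<bar>)"
      unfolding n1 sum_lists_Suc by (simp add: Brow_def brow_dot inner_axis')
    also have "\<dots> = p * norm1 w"
      using sum_pol_pairs[where G="\<lambda>q. \<bar>w $ fst q\<bar>" and pol=pol and hist=tauh]
      by (simp add: p_def norm1_def)
    finally have "(\<Sum>tm\<in>{tm :: ('o \<times> 'a) list. length tm = H - h}.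
            pol_cond pol tm tauh * \<bar>Brow T Z th h tm \<bullet> w\<bar>) = norm1 w"
      unfolding LHS using p0 by simp
    also have "norm1 w \<le> sqrt (real CARD('s)) / alpha * norm1 w"
      using mult_right_mono[OF coef norm1_nonneg[of w]] by (simp only: mult_1)
    finally show ?thesis .
  next
    case False
    then have hH: "Suc h < H" using h_lt by simp
    define x where "x = pinv (Zmat Z th (Suc h)) *v w"
    have brow: "Brow T Z th h tm \<bullet> w =
        ((Zmat Z th H ** Cm T Z th (Suc h) (butlast tm)) *v x) $ fst (last tm)"
      if tm: "length tm = H - h" for tm :: "('o \<times> 'a) list"
    proof -
      have bl2: "length (butlast tm) = H - Suc h" using tm hH by simp
      have bl: "butlast tm \<noteq> []" "length (butlast tm) = H - Suc h"
        using bl2 hH by (auto simp del: length_butlast)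
      have P1: "pinv (Zmat Z th (Suc h)) ** Zmat Z th (Suc h) = mat 1" using PZ hH by simp
      have "Bprod T Z th (Suc h) (butlast tm)
          = Bprod T Z th (Suc h) (butlast tm) ** Zmat Z th (Suc h) ** pinv (Zmat Z th (Suc h))"
        using BP[OF bl(1) P1] by simp
      also have "Bprod T Z th (Suc h) (butlast tm) ** Zmat Z th (Suc h)
          = Zmat Z th H ** Cm T Z th (Suc h) (butlast tm)"
      proof -
        have "Bprod T Z th (Suc h) (butlast tm) ** Zmat Z th (Suc h)
          = Zmat Z th (Suc h + length (butlast tm)) ** Cm T Z th (Suc h) (butlast tm)"
          by (rule BZ) (use PZ bl hH in auto)
        then show ?thesis using bl hH by simp
      qed
      finally have "Bprod T Z th (Suc h) (butlast tm) *v w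
          = (Zmat Z th H ** Cm T Z th (Suc h) (butlast tm)) *v x"
        unfolding x_def by (simp add: matrix_vector_mul_assoc)
      then show ?thesis unfolding Brow_def by (simp add: brow_dot)
    qed
    have "(\<Sum>tm\<in>{tm :: ('o \<times> 'a) list. length tm = H - h}.
            pol_prob pol (tauh @ tm) * \<bar>Brow T Z th h tm \<bullet> w\<bar>)
        = (\<Sum>tm\<in>{tm :: ('o \<times> 'a) list. length tm = H - h}.
            pol_prob pol (tauh @ tm) * \<bar>((Zmat Z th H ** Cm T Z th (Suc h) (butlast tm)) *v x) $ fst (last tm)\<bar>)"
      by (intro sum.cong refl) (simp add: brow)
    also have "\<dots> \<le> p * norm1 x"
      unfolding p_def by (rule main_sum[where H=H and T=T and th=th and Z=Z, OF Tn Ts Zn Zs]) (use h_lt in auto)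
    finally have "(\<Sum>tm\<in>{tm :: ('o \<times> 'a) list. length tm = H - h}.
            pol_cond pol tm tauh * \<bar>Brow T Z th h tm \<bullet> w\<bar>) \<le> norm1 x"
      unfolding LHS using p0 by (simp add: divide_le_eq mult.commute)
    also have "norm1 x \<le> sqrt (real CARD('s)) * norm x" by (rule l1_l2)
    also have "\<dots> \<le> sqrt (real CARD('s)) * (norm w / alpha)"
    proof (rule mult_left_mono)
      have "alpha * norm x \<le> norm w" unfolding x_def
        by (rule pinv_props(2)[OF alpha_pos low]) (use hH in auto)
      then show "norm x \<le> norm w / alpha" using alpha_pos by (simp add: field_simps)
    qed simp
    also have "\<dots> \<le> sqrt (real CARD('s)) * (norm1 w / alpha)"
      using norm_le_norm1[of w] alpha_pos by (intro mult_left_mono divide_right_mono) auto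
    finally show ?thesis by simp
  qed
qed

end
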